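(* Assume that $T$ acts faithfully on $W$ and that $W$ is weakly symmetric. Let $\lambda\in Y(T)_{\mathbb R}$. Then $\Phi_\lambda$ is contained in $H_\lambda^\perp\subset Y(T)_{\mathbb R}$ and is homeomorphic to a sphere of dimension $\dim H_\lambda^\perp-1$ (i.e. to the unit sphere of $H_\lambda^\perp$; this is the empty set if $H_\lambda^\perp=0$).
   Context: $T$ is a torus over an algebraically closed field $k$ of characteristic $0$, with character group $X(T)$, cocharacter group $Y(T)$ and pairing $\langle\,,\rangle$ extended to $Y(T)_{\mathbb R}\times X(T)_{\mathbb R}\to\mathbb R$. $W$ is a $d$-dimensional $T$-representation with weights $\alpha_1,\dots,\alpha_d$. $W$ is weakly symmetric if for every line $\ell\subset X(T)_{\mathbb R}$ through $0$ the cone spanned by the $\alpha_i\in\ell$ is $\{0\}$ or $\ell$. Fix a positive definite quadratic form on $Y(T)_{\mathbb R}$ with norm $\|\cdot\|$ and let $B=\{\mu\in Y(T)_{\mathbb R}:\|\mu\|<1\}$. For $\lambda\in Y(T)_{\mathbb R}$ put $T_\lambda=\{i:\langle\lambda,\alpha_i\rangle<0\}$, $T^0_\lambda=\{i:\langle\lambda,\alpha_i\rangle=0\}$. Write $\lambda\sim\lambda'$ iff $T_\lambda=T_{\lambda'}$. Set $B_\lambda=\{\mu\in B:\mu\sim\lambda\}$, $\Phi_\lambda=\overline{B_\lambda}\setminus B_\lambda$, $H_\lambda=\operatorname{span}_{\mathbb R}\{\alpha_i:i\in T^0_\lambda\}\subset X(T)_{\mathbb R}$, and $H_\lambda^\perp=\{\mu\in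 Y(T)_{\mathbb R}:\langle\mu,h\rangle=0\ \forall h\in H_\lambda\}$. *)

theory Defs
  imports "HOL-Analysis.Analysis"
begin

text \<open>Model: X(T) = int^'n (the rank of T is CARD('n)), X(T)_R = Y(T)_R = real^'n,
  pairing = standard dot product. Weights of W: alpha 0, ..., alpha (d-1).\<close>

definition wt :: "(nat \<Rightarrow> int ^ 'n) \<Rightarrow> nat \<Rightarrow> real ^ 'n" where
  "wt alpha i = (\<chi> j. real_of_int (alpha i $ j))"

text \<open>T acts faithfully: the weights generate the character lattice X(T).\<close>
definition faithful_weights :: "nat \<Rightarrow> (nat \<Rightarrow> int ^ 'n::finite) \<Rightarrow> bool" where
  "faithful_weights d alpha \<longleftrightarrow>
     (\<forall>x :: int ^ 'n. \<exists>c :: nat \<Rightarrow> int. x = (\<Sum>i<d. c i *s alpha i))"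

definition line_cone :: "nat \<Rightarrow> (nat \<Rightarrow> int ^ 'n::finite) \<Rightarrow> real ^ 'n \<Rightarrow> (real ^ 'n) set" where
  "line_cone d alpha v =
     {(\<Sum>i\<in>{i. i < d \<and> wt alpha i \<in> span {v}}. c i *\<^sub>R wt alpha i) | c. \<forall>i. 0 \<le> c i}"

definition weakly_symmetric :: "nat \<Rightarrow> (nat \<Rightarrow> int ^ 'n::finite) \<Rightarrow> bool" where
  "weakly_symmetric d alpha \<longleftrightarrow>
     (\<forall>v. v \<noteq> 0 \<longrightarrow> line_cone d alpha v = {0} \<or> line_cone d alpha v = span {v})"

definition Tneg :: "nat \<Rightarrow> (nat \<Rightarrow> int ^ 'n::finite) \<Rightarrow> real ^ 'n \<Rightarrow> nat set" where
  "Tneg d alpha lam = {i. i < d \<and> lam \<bullet> wt alpha i < 0}"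

definition Tzero :: "nat \<Rightarrow> (nat \<Rightarrow> int ^ 'n::finite) \<Rightarrow> real ^ 'n \<Rightarrow> nat set" where
  "Tzero d alpha lam = {i. i < d \<and> lam \<bullet> wt alpha i = 0}"

definition pos_def_form :: "real ^ 'n ^ 'n \<Rightarrow> bool" where
  "pos_def_form Q \<longleftrightarrow> transpose Q = Q \<and> (\<forall>x. x \<noteq> 0 \<longrightarrow> 0 < x \<bullet> (Q *v x))"

definition qball :: "real ^ 'n ^ 'n \<Rightarrow> (real ^ 'n) set" where
  "qball Q = {mu. mu \<bullet> (Q *v mu) < 1}"

definition Bset :: "nat \<Rightarrow> (nat \<Rightarrow> int ^ 'n::finite) \<Rightarrow> real ^ 'n ^ 'n \<Rightarrow> real ^ 'n \<Rightarrow> (real ^ 'n) set" where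
  "Bset d alpha Q lam = {mu \<in> qball Q. Tneg d alpha mu = Tneg d alpha lam}"

definition Phi :: "nat \<Rightarrow> (nat \<Rightarrow> int ^ 'n::finite) \<Rightarrow> real ^ 'n ^ 'n \<Rightarrow> real ^ 'n \<Rightarrow> (real ^ 'n) set" where
  "Phi d alpha Q lam = closure (Bset d alpha Q lam) - Bset d alpha Q lam"

definition Hsp :: "nat \<Rightarrow> (nat \<Rightarrow> int ^ 'n::finite) \<Rightarrow> real ^ 'n \<Rightarrow> (real ^ 'n) set" where
  "Hsp d alpha lam = span (wt alpha ` Tzero d alpha lam)"

definition Hperp :: "nat \<Rightarrow> (nat \<Rightarrow> int ^ 'n::finite) \<Rightarrow> real ^ 'n \<Rightarrow> (real ^ 'n) set" where
  "Hperp d alpha lam = {mu. \<forall>h\<in>Hsp d alpha lam. mu \<bullet> h = 0}"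

end

theory Submission
  imports Defs
begin


lemma qf_sym:
  fixes Q :: "real ^ 'n ^ 'n"
  assumes "transpose Q = Q"
  shows "x \<bullet> (Q *v y) = y \<bullet> (Q *v x)"
proof -
  have "y \<bullet> (Q *v x) = (y v* Q) \<bullet> x" by (simp add: dot_lmul_matrix)
  also have "\<dots> = (transpose Q *v y) \<bullet> x" by (simp add: transpose_matrix_vector)
  finally show ?thesis using assms by (simp add: inner_commute)
qed

lemma qf_comb:
  fixes Q :: "real ^ 'n ^ 'n"
  assumes "transpose Q = Q"
  shows "(t *\<^sub>R x + u *\<^sub>R y) \<bullet> (Q *v (t *\<^sub>R x + u *\<^sub>R y))
     = t*t * (x \<bullet> (Q *v x)) + u*u*(y \<bullet> (Q *v y)) + 2*t*u*(x \<bullet> (Q *v y))"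
  using qf_sym[OF assms, of y x]
  by (simp add: matrix_vector_right_distrib matrix_vector_mult_scaleR inner_add_left inner_add_right algebra_simps)

lemma qf_diff:
  fixes Q :: "real ^ 'n ^ 'n"
  assumes "transpose Q = Q"
  shows "(x - y) \<bullet> (Q *v (x - y))
     = (x \<bullet> (Q *v x)) + (y \<bullet> (Q *v y)) - 2*(x \<bullet> (Q *v y))"
  using qf_sym[OF assms, of y x]
  by (simp add: matrix_vector_mult_diff_distrib inner_diff_left inner_diff_right algebra_simps)

lemma qball_convex:
  fixes Q :: "real ^ 'n ^ 'n"
  assumes "transpose Q = Q" "\<And>x. x \<noteq> 0 \<Longrightarrow> 0 < x \<bullet> (Q *v x)"
  shows "convex {mu. mu \<bullet> (Q *v mu) < 1}"
  unfolding convex_def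
proof (intro allI impI ballI, simp)
  fix x y :: "real^'n" and u v :: real
  assume x: "x \<bullet> (Q *v x) < 1" and y: "y \<bullet> (Q *v y) < 1" and u: "0 \<le> u" and v: "0 \<le> v" and uv: "u + v = 1"
  have d: "0 \<le> (x - y) \<bullet> (Q *v (x - y))" using assms(2)[of "x-y"] by (cases "x = y") auto
  have e: "(u *\<^sub>R x + v *\<^sub>R y) \<bullet> (Q *v (u *\<^sub>R x + v *\<^sub>R y)) = u * (x \<bullet> (Q *v x)) + v * (y \<bullet> (Q *v y)) - u * v * ((x - y) \<bullet> (Q *v (x - y)))"
  proof -
    have vv: "v = 1 - u" using uv by simp
    show ?thesis unfolding qf_comb[OF assms(1)] qf_diff[OF assms(1)] vv by (simp add: algebra_simps)
  qed
  have "u * v * ((x - y) \<bullet> (Q *v (x - y))) \<ge> 0" using u v d by simp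
  moreover have "u * (x \<bullet> (Q *v x)) + v * (y \<bullet> (Q *v y)) < 1"
  proof (cases "u = 0")
    case True then show ?thesis using uv y by simp
  next
    case False
    have "u * (x \<bullet> (Q *v x)) < u" using x u False by simp
    moreover have "v * (y \<bullet> (Q *v y)) \<le> v" using y v by (simp add: mult_left_le)
    ultimately show ?thesis using uv by linarith
  qed
  ultimately show "(u *\<^sub>R x + v *\<^sub>R y) \<bullet> (Q *v (u *\<^sub>R x + v *\<^sub>R y)) < 1" using e by linarith
qed

lemma qf_cont: "continuous_on S (\<lambda>x::real^'n. x \<bullet> ((Q::real^'n^'n) *v x))"
  by (intro continuous_intros matrix_vector_mult_linear_continuous_on)

lemma qball_open: "open {mu. mu \<bullet> ((Q::real^'n^'n) *v mu) < 1}"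
  using open_Collect_less[of "\<lambda>x::real^'n. x \<bullet> ((Q::real^'n^'n) *v x)" "\<lambda>_. 1"]
  by (metis (no_types) continuous_on_const continuous_on_eq_continuous_at open_UNIV qf_cont)

lemma qball_bounded:
  fixes Q :: "real ^ 'n ^ 'n"
  assumes "\<And>x. x \<noteq> 0 \<Longrightarrow> 0 < x \<bullet> (Q *v x)"
  shows "bounded {mu. mu \<bullet> (Q *v mu) < 1}"
proof -
  have "sphere (0::real^'n) 1 \<noteq> {}" by (simp add: sphere_eq_empty)
  then obtain z where z: "z \<in> sphere 0 1" and zm: "\<forall>y\<in>sphere 0 1. z \<bullet> (Q *v z) \<le> y \<bullet> (Q *v y)"
    using continuous_attains_inf[OF compact_sphere _ qf_cont] by blast
  define m where "m = z \<bullet> (Q *v z)"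
  have "z \<noteq> 0" using z by auto
  then have m: "m > 0" unfolding m_def using assms by auto
  have "norm mu \<le> 1 / sqrt m" if "mu \<bullet> (Q *v mu) < 1" for mu
  proof (cases "mu = 0")
    case True then show ?thesis using m by simp
  next
    case False
    let ?y = "(1 / norm mu) *\<^sub>R mu"
    have "?y \<in> sphere 0 1" using False by simp
    then have "m \<le> ?y \<bullet> (Q *v ?y)" using zm m_def by blast
    also have "\<dots> = (mu \<bullet> (Q *v mu)) / (norm mu)^2"
      by (simp add: matrix_vector_mult_scaleR power2_eq_square)
    finally have "m * (norm mu)^2 \<le> mu \<bullet> (Q *v mu)" using False by (simp add: field_simps)
    then have "m * (norm mu)^2 < 1" using that by linarith
    then have "(norm mu)^2 < 1 / m" using m by (simp add: field_simps)
    then have "norm mu < sqrt (1/m)" using real_less_rsqrt by blast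
    then show ?thesis by (simp add: real_sqrt_divide)
  qed
  then show ?thesis unfolding bounded_iff by blast
qed

lemma ws_opp:
  fixes alpha :: "nat \<Rightarrow> int ^ 'n::finite"
  assumes ws: "weakly_symmetric d alpha" and i: "i < d" and nz: "wt alpha i \<noteq> 0"
  shows "\<exists>j<d. \<exists>c>0. wt alpha j = - (c *\<^sub>R wt alpha i)"
proof -
  define v where "v = wt alpha i"
  define S where "S = {j. j < d \<and> wt alpha j \<in> span {v}}"
  have iS: "i \<in> S" unfolding S_def v_def using i by (simp add: span_base)
  have fS: "finite S" unfolding S_def by simp
  have "v \<in> line_cone d alpha v"
  proof -
    have "(\<Sum>j\<in>S. (if j = i then 1 else 0) *\<^sub>R wt alpha j) = v"
    proof -
      have "(\<Sum>j\<in>S. (if j = i then 1 else 0) *\<^sub>R wt alpha j) = (\<Sum>j\<in>S. if j = i then wt alpha j else 0)"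
        by (intro sum.cong) auto
      then show ?thesis using iS fS by (simp add: v_def)
    qed
    then show ?thesis unfolding line_cone_def S_def[symmetric]
      by (intro CollectI exI[of _ "\<lambda>j. if j = i then 1 else 0"]) auto
  qed
  moreover have "v \<noteq> 0" using nz v_def by simp
  ultimately have lc: "line_cone d alpha v = span {v}"
    using ws unfolding weakly_symmetric_def by blast
  have "- v \<in> span {v}" by (simp add: span_base span_neg)
  then have "- v \<in> line_cone d alpha v" using lc by simp
  then obtain c where c: "\<forall>j. 0 \<le> c j" and cs: "- v = (\<Sum>j\<in>S. c j *\<^sub>R wt alpha j)"
    unfolding line_cone_def S_def[symmetric] by blast
  define t where "t j = (SOME t. wt alpha j = t *\<^sub>R v)" for j
  have t: "wt alpha j = t j *\<^sub>R v" if "j \<in> S" for j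
  proof -
    have "\<exists>t. wt alpha j = t *\<^sub>R v" using that unfolding S_def by (auto simp: span_singleton)
    then show ?thesis unfolding t_def by (rule someI_ex)
  qed
  have "- v = (\<Sum>j\<in>S. c j *\<^sub>R (t j *\<^sub>R v))" using cs t by (simp cong: sum.cong)
  also have "\<dots> = (\<Sum>j\<in>S. c j * t j) *\<^sub>R v" by (simp add: scaleR_sum_left)
  finally have "(-1) *\<^sub>R v = (\<Sum>j\<in>S. c j * t j) *\<^sub>R v" by simp
  then have "(-1) = (\<Sum>j\<in>S. c j * t j) \<or> v = 0" by (simp only: scaleR_cancel_right)
  then have sum1: "(\<Sum>j\<in>S. c j * t j) = -1" using \<open>v \<noteq> 0\<close> by simp
  have "\<exists>j\<in>S. c j * t j < 0"
  proof (rule ccontr)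
    assume "\<not> ?thesis"
    then have "0 \<le> (\<Sum>j\<in>S. c j * t j)" by (intro sum_nonneg) (auto simp: not_less)
    then show False using sum1 by simp
  qed
  then obtain j where jS: "j \<in> S" and neg: "c j * t j < 0" by blast
  have "t j < 0" using neg c[rule_format, of j] by (auto simp: mult_less_0_iff)
  moreover have "j < d" using jS S_def by simp
  ultimately show ?thesis using t[OF jS] v_def by (intro exI[of _ j] conjI exI[of _ "- t j"]) auto
qed

lemma Hperp_iff:
  "mu \<in> Hperp d alpha lam \<longleftrightarrow> (\<forall>i\<in>Tzero d alpha lam. mu \<bullet> wt alpha i = 0)"
proof
  assume "mu \<in> Hperp d alpha lam"
  then show "\<forall>i\<in>Tzero d alpha lam. mu \<bullet> wt alpha i = 0"
    unfolding Hperp_def Hsp_def by (auto intro: span_base)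
next
  assume a: "\<forall>i\<in>Tzero d alpha lam. mu \<bullet> wt alpha i = 0"
  show "mu \<in> Hperp d alpha lam" unfolding Hperp_def Hsp_def
  proof (intro CollectI ballI)
    fix h assume "h \<in> span (wt alpha ` Tzero d alpha lam)"
    moreover have "\<forall>x\<in>wt alpha ` Tzero d alpha lam. orthogonal mu x" using a by (auto simp: orthogonal_def)
    ultimately show "mu \<bullet> h = 0" using orthogonal_to_span by (metis orthogonal_def)
  qed
qed

lemma Hperp_subspace: "subspace (Hperp d alpha lam)"
  unfolding subspace_def Hperp_def by (auto simp: inner_add_left)

theorem mainTheorem3:
  fixes d :: nat and alpha :: "nat \<Rightarrow> int ^ 'n::finite"
    and Q :: "real ^ 'n ^ 'n" and lam :: "real ^ 'n"
  assumes "pos_def_form Q"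
    and "faithful_weights d alpha"
    and "weakly_symmetric d alpha"
  shows "Phi d alpha Q lam \<subseteq> Hperp d alpha lam \<and>
         Phi d alpha Q lam homeomorphic (sphere 0 1 \<inter> Hperp d alpha lam)"
proof -
  note ws = assms(3)
  have Qs: "transpose Q = Q" and Qp: "\<And>x. x \<noteq> 0 \<Longrightarrow> 0 < x \<bullet> (Q *v x)"
    using assms(1) unfolding pos_def_form_def by auto
  define H where "H = Hperp d alpha lam"
  define B where "B = Bset d alpha Q lam"
  define N where "N = (\<Inter>i\<in>Tneg d alpha lam. {mu. wt alpha i \<bullet> mu < 0})"
  define qb where "qb = qball Q"
  have subH: "subspace H" unfolding H_def by (rule Hperp_subspace)
  have clH: "closed H" using subH closed_subspace by blast
  have BH: "B \<subseteq> H"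
  proof
    fix mu assume mu: "mu \<in> B"
    then have T: "Tneg d alpha mu = Tneg d alpha lam" unfolding B_def Bset_def by simp
    show "mu \<in> H" unfolding H_def Hperp_iff
    proof
      fix i assume i: "i \<in> Tzero d alpha lam"
      show "mu \<bullet> wt alpha i = 0"
      proof (cases "wt alpha i = 0")
        case True then show ?thesis by simp
      next
        case False
        then obtain j c where j: "j < d" and c: "c > 0" and wj: "wt alpha j = - (c *\<^sub>R wt alpha i)"
          using ws_opp[OF ws] i unfolding Tzero_def by blast
        have "lam \<bullet> wt alpha j = 0" using i wj unfolding Tzero_def by simp
        then have "j \<notin> Tneg d alpha mu" "i \<notin> Tneg d alpha mu" using i T unfolding Tneg_def Tzero_def by auto
        then have "mu \<bullet> wt alpha j \<ge> 0" "mu \<bullet> wt alpha i \<ge> 0" using i j unfolding Tneg_def Tzero_def by auto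
        moreover have "mu \<bullet> wt alpha j = - c * (mu \<bullet> wt alpha i)" using wj by simp
        ultimately have "c * (mu \<bullet> wt alpha i) \<le> 0" by linarith
        then have "mu \<bullet> wt alpha i \<le> 0" using c by (simp add: mult_le_0_iff)
        then show ?thesis using \<open>mu \<bullet> wt alpha i \<ge> 0\<close> by linarith
      qed
    qed
  qed
  have Beq: "B = H \<inter> (qb \<inter> N)"
  proof
    show "B \<subseteq> H \<inter> (qb \<inter> N)" using BH unfolding B_def Bset_def qb_def N_def Tneg_def
      by (auto simp: inner_commute)
  next
    show "H \<inter> (qb \<inter> N) \<subseteq> B"
    proof
      fix mu assume mu: "mu \<in> H \<inter> (qb \<inter> N)"
      have "Tneg d alpha mu = Tneg d alpha lam"
      proof
        show "Tneg d alpha lam \<subseteq> Tneg d alpha mu"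
          using mu unfolding N_def by (auto simp: Tneg_def inner_commute)
      next
        show "Tneg d alpha mu \<subseteq> Tneg d alpha lam"
        proof
          fix i assume i: "i \<in> Tneg d alpha mu"
          then have id: "i < d" and mi: "mu \<bullet> wt alpha i < 0" unfolding Tneg_def by auto
          consider "lam \<bullet> wt alpha i < 0" | "lam \<bullet> wt alpha i = 0" | "lam \<bullet> wt alpha i > 0" by linarith
          then show "i \<in> Tneg d alpha lam"
          proof cases
            case 1 then show ?thesis using id by (simp add: Tneg_def)
          next
            case 2
            then have "i \<in> Tzero d alpha lam" using id by (simp add: Tzero_def)
            moreover have "mu \<in> Hperp d alpha lam" using mu H_def by blast
            ultimately have "mu \<bullet> wt alpha i = 0" unfolding Hperp_iff by blast
            then show ?thesis using mi by simp
          next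
            case 3
            then have "wt alpha i \<noteq> 0" by auto
            then obtain j c where j: "j < d" and c: "c > 0" and wj: "wt alpha j = - (c *\<^sub>R wt alpha i)"
              using ws_opp[OF ws id] by blast
            have "lam \<bullet> wt alpha j < 0" using wj c 3 by simp
            then have "j \<in> Tneg d alpha lam" using j by (simp add: Tneg_def)
            then have "mu \<bullet> wt alpha j < 0" using mu unfolding N_def by (auto simp: inner_commute)
            moreover have "mu \<bullet> wt alpha j = - c * (mu \<bullet> wt alpha i)" using wj by simp
            ultimately have "c * (mu \<bullet> wt alpha i) > 0" by linarith
            then have False using c mi by (simp add: zero_less_mult_iff)
            then show ?thesis ..
          qed
        qed
      qed
      then show "mu \<in> B" using mu unfolding B_def Bset_def qb_def by auto
    qed
  qed
  have finT: "finite (Tneg d alpha lam)" unfolding Tneg_def by simp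
  have openN: "open N" unfolding N_def using finT by (intro open_INT) (auto intro: open_halfspace_lt)
  have convN: "convex N" unfolding N_def by (intro convex_INT) (auto intro: convex_halfspace_lt)
  have openqb: "open qb" unfolding qb_def qball_def by (rule qball_open)
  have convqb: "convex qb" unfolding qb_def qball_def by (rule qball_convex[OF Qs Qp])
  have bqb: "bounded qb" unfolding qb_def qball_def by (rule qball_bounded[OF Qp])
  have convB: "convex B" unfolding Beq using subspace_imp_convex[OF subH] convqb convN
    by (intro convex_Int)
  have bB: "bounded B" unfolding Beq by (rule bounded_subset[OF bqb]) blast
  have lamH: "lam \<in> H" unfolding H_def Hperp_iff by (simp add: Tzero_def)
  define q where "q = lam \<bullet> (Q *v lam)"
  have q0: "q \<ge> 0" unfolding q_def using Qp[of lam] by (cases "lam = 0") auto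
  define t where "t = 1 / (q + 1)"
  have t0: "t > 0" using q0 t_def by simp
  have pB: "t *\<^sub>R lam \<in> H \<inter> (qb \<inter> N)"
  proof (intro IntI)
    show "t *\<^sub>R lam \<in> H" using lamH subH by (simp add: subspace_scale)
    have "(t *\<^sub>R lam) \<bullet> (Q *v (t *\<^sub>R lam)) = q / (q+1)^2"
      by (simp add: q_def t_def matrix_vector_mult_scaleR power2_eq_square)
    also have "\<dots> < 1"
    proof -
      have "q < (q+1)^2" using q0 by (simp add: power2_eq_square algebra_simps) (smt (verit) mult_nonneg_nonneg)
      moreover have "(q+1)^2 > 0" using q0 by simp
      ultimately show ?thesis by (simp add: divide_less_eq)
    qed
    finally show "t *\<^sub>R lam \<in> qb" unfolding qb_def qball_def by simp
    show "t *\<^sub>R lam \<in> N" unfolding N_def using t0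
      by (auto simp: Tneg_def inner_commute mult_pos_neg)
  qed
  have ne: "H \<inter> (qb \<inter> N) \<noteq> {}" using pB by blast
  have relB: "rel_interior B = B"
  proof
    show "rel_interior B \<subseteq> B" by (rule rel_interior_subset)
    show "B \<subseteq> rel_interior B"
    proof
      fix x assume x: "x \<in> B"
      have "affine hull B \<subseteq> H" using BH subH by (intro hull_minimal subspace_imp_affine) auto
      then have "(qb \<inter> N) \<inter> affine hull B \<subseteq> B" unfolding Beq by blast
      then show "x \<in> rel_interior B" unfolding mem_rel_interior using x openqb openN Beq
        by (intro exI[of _ "qb \<inter> N"]) auto
    qed
  qed
  have affB: "aff_dim B = aff_dim H"
    unfolding Beq using aff_dim_convex_Int_open[OF subspace_imp_convex[OF subH] open_Int[OF openqb openN] ne] .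
  have affball: "aff_dim (ball 0 1 \<inter> H) = aff_dim H"
    by (metis IntI interior_ball subH aff_dim_convex_Int_nonempty_interior centre_in_ball empty_iff inf_commute subspace_0 subspace_imp_convex zero_less_one)
  have PhiEq: "Phi d alpha Q lam = rel_frontier B"
    using relB unfolding Phi_def rel_frontier_def B_def by simp
  have "rel_frontier B homeomorphic rel_frontier (ball 0 1 \<inter> H)"
  proof (rule homeomorphic_rel_frontiers_convex_bounded_sets[OF convB bB])
    show "convex (ball 0 1 \<inter> H)" by (intro convex_Int convex_ball subspace_imp_convex[OF subH])
    show "bounded (ball 0 1 \<inter> H)" by (intro bounded_Int) simp
    show "aff_dim B = aff_dim (ball 0 1 \<inter> H)" using affB affball by simp
  qed
  also have "rel_frontier (ball 0 1 \<inter> H) = frontier (ball 0 1) \<inter> H"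
  proof (rule convex_affine_rel_frontier_Int [OF convex_ball])
    show "affine H" by (simp add: subH subspace_imp_affine)
    show "interior (ball 0 1) \<inter> H \<noteq> {}" using subH subspace_0 by force
  qed
  also have "\<dots> = sphere 0 1 \<inter> H" by simp
  finally have hom: "rel_frontier B homeomorphic sphere 0 1 \<inter> H" .
  have "rel_frontier B \<subseteq> H"
    using BH clH closure_minimal rel_frontier_def by (metis Diff_subset subset_trans)
  then show ?thesis using hom PhiEq H_def by simp
qed
end
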